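(* The Lie algebra $\Lambda_1(\mathbb{Q}\mathrm{Par}_2)$ is generated by $x_1x_2$, $x_1^2x_2$, $x_1x_2^2$, and $x_1^3x_2+x_1x_2^3$.
   Context: The nonsymmetric operad of partitions $\mathrm{Par}$: $\mathrm{Par}((1))=\{1\}$, and for $m\ge2$, $\mathrm{Par}((m))$ is the set of monomials $\prod_{i=1}^Nx_i^{a_i}$ with $N\ge2$, all $a_i\ge1$, $\sum a_i=m$ (nontrivial order-preserving partitions of $\{1,\dots,m\}$ into consecutive blocks of sizes $a_1,\dots,a_N$). Partial composition: if $a_1+\dots+a_{l-1}+1\le s\le a_1+\dots+a_l$, then $\left(\prod_{i=1}^Nx_i^{a_i}\right)\circ_s\left(\prod_{k=1}^{N_s}x_k^{b_k}\right)=x_l^{a_l-1+\sum_kb_k}\prod_{i\ne l}x_i^{a_i}$; and $1$ is a two-sided unit. $\mathrm{Par}_2$ is the suboperad with $\mathrm{Par}_2((1))=\{1\}$ and $\mathrm{Par}_2((m))$ the monomials in $\mathrm{Par}((m))$ involving only $x_1,x_2$, i.e. $x_1^ax_2^b$ with $a,b\ge1$, $a+b=m$. $\Lambda_1(\mathbb{Q}\mathrm{Par}_2)=\bigoplus_{m\ge2}\mathbb{Q}\mathrm{Par}_2((m))$ with Lie bracket $[c,d]=\sum_{t=1}^{j}d\circ_tc-\sum_{s=1}^{k}c\circ_sd$ for $c\in\mathrm{Par}_2((k))$, $d\in\mathrm{Par}_2((j))$, extended bilinearly. *)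

theory Defs
  imports Complex_Main "HOL-Library.Function_Algebras"
begin

text \<open>A monomial x1^a x2^b of Par_2((a+b)), a,b \<ge> 1, is encoded by the pair (a,b).\<close>

definition is_par2 :: "nat \<times> nat \<Rightarrow> bool" where
  "is_par2 c \<longleftrightarrow> fst c \<ge> 1 \<and> snd c \<ge> 1"

definition arity :: "nat \<times> nat \<Rightarrow> nat" where
  "arity c = fst c + snd c"

text \<open>Partial composition in Par_2: (x1^a x2^b) o_s (x1^p x2^q), for 1 \<le> s \<le> a+b.\<close>
definition parcomp :: "nat \<times> nat \<Rightarrow> nat \<Rightarrow> nat \<times> nat \<Rightarrow> nat \<times> nat" where
  "parcomp c s d =
     (if s \<le> fst c then (fst c - 1 + arity d, snd c) else (fst c, snd c - 1 + arity d))"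

text \<open>Vectors of Q Par_2: finitely supported rational functions on the monomials.\<close>
definition basis_vec :: "nat \<times> nat \<Rightarrow> (nat \<times> nat \<Rightarrow> rat)" where
  "basis_vec c = (\<lambda>m. if m = c then 1 else 0)"

definition par2_space :: "(nat \<times> nat \<Rightarrow> rat) set" where
  "par2_space = {f. finite {m. f m \<noteq> 0} \<and> (\<forall>m. f m \<noteq> 0 \<longrightarrow> is_par2 m)}"

definition bracket_basis :: "nat \<times> nat \<Rightarrow> nat \<times> nat \<Rightarrow> (nat \<times> nat \<Rightarrow> rat)" where
  "bracket_basis c d =
     (\<Sum>t = 1..arity d. basis_vec (parcomp d t c)) - (\<Sum>s = 1..arity c. basis_vec (parcomp c s d))"

definition lie_bracket :: "(nat \<times> nat \<Rightarrow> rat) \<Rightarrow> (nat \<times> nat \<Rightarrow> rat) \<Rightarrow> (nat \<times> nat \<Rightarrow> rat)" where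
  "lie_bracket f g =
     (\<Sum>c\<in>{m. f m \<noteq> 0}. \<Sum>d\<in>{m. g m \<noteq> 0}. (\<lambda>m. f c * g d * bracket_basis c d m))"

inductive_set lie_generated :: "(nat \<times> nat \<Rightarrow> rat) set \<Rightarrow> (nat \<times> nat \<Rightarrow> rat) set"
  for S where
  gen_base: "x \<in> S \<Longrightarrow> x \<in> lie_generated S"
| gen_zero: "0 \<in> lie_generated S"
| gen_add: "x \<in> lie_generated S \<Longrightarrow> y \<in> lie_generated S \<Longrightarrow> x + y \<in> lie_generated S"
| gen_smult: "x \<in> lie_generated S \<Longrightarrow> (\<lambda>m. r * x m) \<in> lie_generated S"
| gen_bracket: "x \<in> lie_generated S \<Longrightarrow> y \<in> lie_generated S \<Longrightarrow> lie_bracket x y \<in> lie_generated S"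

end

theory Submission
  imports Defs
begin

definition "L = lie_generated {basis_vec (1,1), basis_vec (2,1), basis_vec (1,2),
            basis_vec (3,1) + basis_vec (1,3)}"

lemma sum_fun_apply: "(sum F A) x = sum (\<lambda>a. F a x) A"
  by (induction A rule: infinite_finite_induct) auto

lemma sum_const_fun: "(\<Sum>t\<in>A. (c::'a \<Rightarrow> rat)) = of_nat (card A) * c"
  by (simp add: sum_constant)

lemma bracket_formula:
  assumes "a \<ge> 1" "b \<ge> 1"
  shows "(\<Sum>t = 1..arity (a,b). basis_vec (parcomp (a,b) t c))
     = of_nat a * basis_vec (a - 1 + arity c, b) + of_nat b * basis_vec (a, b - 1 + arity c)"
proof -
  have split: "{1..a+b} = {1..a} \<union> {a+1..a+b}" using assms by auto
  have "(\<Sum>t = 1..arity (a,b). basis_vec (parcomp (a,b) t c))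
      = (\<Sum>t\<in>{1..a}. basis_vec (parcomp (a,b) t c)) + (\<Sum>t\<in>{a+1..a+b}. basis_vec (parcomp (a,b) t c))"
    unfolding arity_def fst_conv snd_conv split by (rule sum.union_disjoint) auto
  also have "(\<Sum>t\<in>{1..a}. basis_vec (parcomp (a,b) t c)) = (\<Sum>t\<in>{1..a}. basis_vec (a - 1 + arity c, b))"
    by (rule sum.cong) (auto simp: parcomp_def)
  also have "(\<Sum>t\<in>{a+1..a+b}. basis_vec (parcomp (a,b) t c)) = (\<Sum>t\<in>{a+1..a+b}. basis_vec (a, b - 1 + arity c))"
    by (rule sum.cong) (auto simp: parcomp_def)
  finally show ?thesis using assms by (simp add: sum_constant fun_eq_iff)
qed

lemma bb_formula:
  assumes "p \<ge> 1" "a \<ge> 1" "q \<ge> 1" "b \<ge> 1"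
  shows "bracket_basis (p,q) (a,b) =
     of_nat a * basis_vec (a + p + q - 1, b) + of_nat b * basis_vec (a, b + p + q - 1)
   - of_nat p * basis_vec (p + a + b - 1, q) - of_nat q * basis_vec (p, q + a + b - 1)"
proof -
  have 1: "(\<Sum>t = 1..arity (a,b). basis_vec (parcomp (a,b) t (p,q)))
     = of_nat a * basis_vec (a + p + q - 1, b) + of_nat b * basis_vec (a, b + p + q - 1)"
    using bracket_formula[of a b "(p,q)"] assms by (simp add: arity_def add.assoc)
  have 2: "(\<Sum>t = 1..arity (p,q). basis_vec (parcomp (p,q) t (a,b)))
     = of_nat p * basis_vec (p + a + b - 1, q) + of_nat q * basis_vec (p, q + a + b - 1)"
    using bracket_formula[of p q "(a,b)"] assms by (simp add: arity_def add.assoc)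
  show ?thesis unfolding bracket_basis_def 1 2 by simp
qed

lemma lb_basis: "lie_bracket (basis_vec c) (basis_vec d) = bracket_basis c d"
proof -
  have s: "\<And>c. {m. basis_vec c m \<noteq> 0} = {c}" by (auto simp: basis_vec_def)
  show ?thesis unfolding lie_bracket_def s by (simp add: basis_vec_def)
qed

lemma L_add: "x \<in> L \<Longrightarrow> y \<in> L \<Longrightarrow> x + y \<in> L" unfolding L_def by (rule gen_add)
lemma L_smult: "x \<in> L \<Longrightarrow> (\<lambda>m. r * x m) \<in> L" unfolding L_def by (rule gen_smult)
lemma L_bracket: "x \<in> L \<Longrightarrow> y \<in> L \<Longrightarrow> lie_bracket x y \<in> L" unfolding L_def by (rule gen_bracket)

lemma L_diff: "x \<in> L \<Longrightarrow> y \<in> L \<Longrightarrow> x - y \<in> L"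
proof -
  assume x: "x \<in> L" and y: "y \<in> L"
  have "(\<lambda>m. (-1) * y m) \<in> L" by (rule L_smult[OF y])
  moreover have "x - y = x + (\<lambda>m. (-1) * y m)" by (simp add: fun_eq_iff)
  ultimately show ?thesis using L_add[OF x] by metis
qed

lemma L_nat: "x \<in> L \<Longrightarrow> of_nat k * x \<in> L"
proof -
  assume x: "x \<in> L"
  have "(\<lambda>m. of_nat k * x m) \<in> L" by (rule L_smult[OF x])
  moreover have "of_nat k * x = (\<lambda>m. of_nat k * x m)" by (simp add: fun_eq_iff)
  ultimately show ?thesis by simp
qed

lemma L_div: "of_nat k * x \<in> L \<Longrightarrow> k > 0 \<Longrightarrow> x \<in> L"
proof -
  assume x: "of_nat k * x \<in> L" and k: "k > 0"
  have "(\<lambda>m. (1 / of_nat k) * (of_nat k * x) m) \<in> L" by (rule L_smult[OF x])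
  moreover have "x = (\<lambda>m. (1 / of_nat k) * (of_nat k * x) m)" using k by (simp add: fun_eq_iff)
  ultimately show ?thesis by simp
qed

lemma L_bb: "basis_vec c \<in> L \<Longrightarrow> basis_vec d \<in> L \<Longrightarrow> bracket_basis c d \<in> L"
  using L_bracket[of "basis_vec c" "basis_vec d"] lb_basis by metis

lemma L11: "basis_vec (1,1) \<in> L" unfolding L_def by (rule gen_base) simp
lemma L21: "basis_vec (2,1) \<in> L" unfolding L_def by (rule gen_base) simp
lemma L12: "basis_vec (1,2) \<in> L" unfolding L_def by (rule gen_base) simp
lemma LS: "basis_vec (3,1) + basis_vec (1,3) \<in> L" unfolding L_def by (rule gen_base) simp

lemma arity4: "basis_vec (3,1) \<in> L \<and> basis_vec (2,2) \<in> L \<and> basis_vec (1,3) \<in> L"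
proof -
  define U where "U = bracket_basis (1,1) (2,1)"
  define V where "V = bracket_basis (1,1) (1,2)"
  define S where "S = basis_vec (3,1) + basis_vec (1,3)"
  have U: "U \<in> L" unfolding U_def by (rule L_bb[OF L11 L21])
  have V: "V \<in> L" unfolding V_def by (rule L_bb[OF L11 L12])
  have S: "S \<in> L" unfolding S_def by (rule LS)
  have Ue: "U = 2 * basis_vec (3,1) + basis_vec (2,2) - basis_vec (3,1) - basis_vec (1,3)"
    unfolding U_def by (subst bb_formula) (simp_all add: numeral_2_eq_2 numeral_3_eq_3)
  have Ve: "V = basis_vec (2,2) + 2 * basis_vec (1,3) - basis_vec (3,1) - basis_vec (1,3)"
    unfolding V_def by (subst bb_formula) (simp_all add: numeral_2_eq_2 numeral_3_eq_3)
  have 1: "of_nat 4 * basis_vec (3,1) = of_nat 2 * S + U - V"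
    unfolding Ue Ve S_def by (simp add: algebra_simps)
  have 2: "of_nat 4 * basis_vec (1,3) = of_nat 2 * S - U + V"
    unfolding Ue Ve S_def by (simp add: algebra_simps)
  have 3: "of_nat 2 * basis_vec (2,2) = U + V"
    unfolding Ue Ve S_def by (simp add: algebra_simps)
  have a: "of_nat 2 * S + U - V \<in> L" by (intro L_diff L_add L_nat U V S)
  have b: "of_nat 2 * S - U + V \<in> L" by (intro L_diff L_add L_nat U V S)
  have c: "U + V \<in> L" by (intro L_add U V)
  show ?thesis using L_div[of 4] L_div[of 2] a b c 1 2 3 by (metis zero_less_numeral)
qed

lemma interior:
  assumes f1: "basis_vec (1, N - 1) \<in> L" and fM: "basis_vec (N - 1, 1) \<in> L"
    and prev: "\<And>a b. a \<ge> 1 \<Longrightarrow> b \<ge> 1 \<Longrightarrow> a + b = N - 1 \<Longrightarrow> basis_vec (a,b) \<in> L"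
  shows "1 \<le> a \<Longrightarrow> a < N \<Longrightarrow> basis_vec (a, N - a) \<in> L"
proof (induction a)
  case 0 then show ?case by simp
next
  case (Suc a)
  show ?case
  proof (cases "a = 0")
    case True then have "Suc a = 1" by simp
    with f1 show ?thesis by (simp only:)
  next
    case False
    then have a1: "a \<ge> 1" by simp
    define b where "b = N - a - 1"
    have b: "N = a + b + 1" "b \<ge> 1" using Suc.prems unfolding b_def by auto
    have IH: "basis_vec (a, b + 1) \<in> L" using Suc.IH a1 b by (simp add: add.commute)
    have W: "bracket_basis (1,1) (a,b) \<in> L"
      by (rule L_bb[OF L11 prev]) (use a1 b in auto)
    have We: "bracket_basis (1,1) (a,b) = of_nat a * basis_vec (a+1, b) + of_nat b * basis_vec (a, b+1)
       - basis_vec (a+b, 1) - basis_vec (1, a+b)"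
      using a1 b by (subst bb_formula) auto
    have e: "of_nat a * basis_vec (a+1, b) = bracket_basis (1,1) (a,b) - of_nat b * basis_vec (a, b+1)
       + basis_vec (N - 1, 1) + basis_vec (1, N - 1)"
      unfolding We using b by (simp add: algebra_simps)
    have "of_nat a * basis_vec (a+1, b) \<in> L"
      unfolding e by (intro L_add L_diff L_nat W IH f1 fM)
    then have "basis_vec (a+1, b) \<in> L" using L_div a1 by simp
    then show ?thesis using b by (simp add: add.commute)
  qed
qed

lemma boundary:
  fixes n :: nat
  assumes prev: "\<And>a b. a \<ge> 1 \<Longrightarrow> b \<ge> 1 \<Longrightarrow> a + b < n + 5 \<Longrightarrow> basis_vec (a,b) \<in> L"
  shows "basis_vec (1, n+4) \<in> L \<and> basis_vec (n+4, 1) \<in> L"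
proof -
  define A where "A = bracket_basis (1,1) (1,n+3)"
  define B where "B = bracket_basis (1,1) (n+3,1)"
  define P where "P = bracket_basis (2,1) (1,n+2)"
  define Q where "Q = bracket_basis (1,2) (1,n+2)"
  define W where "W = bracket_basis (1,1) (2,n+2)"
  have A: "A \<in> L" unfolding A_def by (intro L_bb L11 prev) auto
  have B: "B \<in> L" unfolding B_def by (intro L_bb L11 prev) auto
  have P: "P \<in> L" unfolding P_def by (intro L_bb L21 prev) auto
  have Q: "Q \<in> L" unfolding Q_def by (intro L_bb L12 prev) auto
  have W: "W \<in> L" unfolding W_def by (intro L_bb L11 prev) auto
  have Ae: "A = basis_vec (2, n+3) + of_nat (n+3) * basis_vec (1, n+4) - basis_vec (n+4, 1) - basis_vec (1, n+4)"
    unfolding A_def by (subst bb_formula) (simp_all add: ac_simps numeral_eq_Suc add_Suc_right add_Suc)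
  have Be: "B = of_nat (n+3) * basis_vec (n+4, 1) + basis_vec (n+3, 2) - basis_vec (n+4, 1) - basis_vec (1, n+4)"
    unfolding B_def by (subst bb_formula) (simp_all add: ac_simps numeral_eq_Suc add_Suc_right add_Suc)
  have Pe: "P = basis_vec (3, n+2) + of_nat (n+2) * basis_vec (1, n+4) - 2 * basis_vec (n+4, 1) - basis_vec (2, n+3)"
    unfolding P_def by (subst bb_formula) (simp_all add: ac_simps numeral_eq_Suc add_Suc_right add_Suc)
  have Qe: "Q = basis_vec (3, n+2) + of_nat (n+2) * basis_vec (1, n+4) - basis_vec (n+3, 2) - 2 * basis_vec (1, n+4)"
    unfolding Q_def by (subst bb_formula) (simp_all add: ac_simps numeral_eq_Suc add_Suc_right add_Suc)
  have We: "W = 2 * basis_vec (3, n+2) + of_nat (n+2) * basis_vec (2, n+3) - basis_vec (n+4, 1) - basis_vec (1, n+4)"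
    unfolding W_def by (subst bb_formula) (simp_all add: ac_simps numeral_eq_Suc add_Suc_right add_Suc)
  define X where "X = of_nat 2 * P - W + of_nat (n+4) * A"
  define Y where "Y = P - Q + A - B"
  have X: "X \<in> L" unfolding X_def by (intro L_add L_diff L_nat A P W)
  have Y: "Y \<in> L" unfolding Y_def by (intro L_add L_diff L_nat A P Q B)
  have e1: "of_nat ((n+5)*(n+1)*(n+6)) * basis_vec (1, n+4) = of_nat (n+5) * X - of_nat (n+7) * Y"
    unfolding X_def Y_def Ae Be Pe Qe We by (simp add: algebra_simps)
  have e2: "of_nat (n+5) * basis_vec (n+4, 1) = of_nat (n+5) * basis_vec (1, n+4) - Y"
    unfolding Y_def Ae Be Pe Qe We by (simp add: algebra_simps)
  have "of_nat (n+5) * X - of_nat (n+7) * Y \<in> L" by (intro L_diff L_nat X Y)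
  then have "of_nat ((n+5)*(n+1)*(n+6)) * basis_vec (1, n+4) \<in> L" by (simp only: e1)
  then have f1: "basis_vec (1, n+4) \<in> L" by (rule L_div) simp
  have "of_nat (n+5) * basis_vec (1, n+4) - Y \<in> L" by (intro L_diff L_nat f1 Y)
  then have "of_nat (n+5) * basis_vec (n+4, 1) \<in> L" by (simp only: e2)
  then have "basis_vec (n+4, 1) \<in> L" by (rule L_div) simp
  with f1 show ?thesis by simp
qed


lemma all_arity: "a \<ge> 1 \<Longrightarrow> b \<ge> 1 \<Longrightarrow> basis_vec (a,b) \<in> L"
proof (induction "a + b" arbitrary: a b rule: less_induct)
  case less
  define N where "N = a + b"
  show ?case
  proof (cases "N \<le> 4")
    case True
    then have "(a,b) \<in> {(1,1),(1,2),(2,1),(1,3),(2,2),(3,1)}"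
      using less.prems unfolding N_def by auto
    then show ?thesis using L11 L12 L21 arity4 by auto
  next
    case False
    then obtain n where n: "N = n + 5" by (metis add.commute le_Suc_ex not_less_eq_eq numeral_plus_one semiring_norm(5)  eval_nat_numeral(3))
    have prev: "\<And>a' b'. a' \<ge> 1 \<Longrightarrow> b' \<ge> 1 \<Longrightarrow> a' + b' < n + 5 \<Longrightarrow> basis_vec (a',b') \<in> L"
      using less.hyps n unfolding N_def by auto
    have bd: "basis_vec (1, n+4) \<in> L \<and> basis_vec (n+4, 1) \<in> L" by (rule boundary[OF prev])
    have "basis_vec (a, N - a) \<in> L"
    proof (rule interior[of N])
      have e: "N - 1 = n + 4" using n by simp
      show "basis_vec (1, N - 1) \<in> L" using bd by (simp only: e)
      show "basis_vec (N - 1, 1) \<in> L" using bd by (simp only: e)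
      show "\<And>a b. 1 \<le> a \<Longrightarrow> 1 \<le> b \<Longrightarrow> a + b = N - 1 \<Longrightarrow> basis_vec (a, b) \<in> L"
        using prev n by auto
      show "1 \<le> a" using less.prems by simp
      show "a < N" using less.prems unfolding N_def by simp
    qed
    then show ?thesis unfolding N_def by simp
  qed
qed

lemma bv_par2: "is_par2 m \<Longrightarrow> basis_vec m \<in> L"
  unfolding is_par2_def using all_arity[of "fst m" "snd m"] by simp

lemma L_zero: "0 \<in> L" unfolding L_def by (rule gen_zero)

lemma L_sum: "finite A \<Longrightarrow> (\<And>a. a \<in> A \<Longrightarrow> g a \<in> L) \<Longrightarrow> sum g A \<in> L"
  by (induction A rule: finite_induct) (auto intro: L_zero L_add)

lemma par2_sub_L: "f \<in> par2_space \<Longrightarrow> f \<in> L"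
proof -
  assume f: "f \<in> par2_space"
  define S where "S = {m. f m \<noteq> 0}"
  have fin: "finite S" and p: "\<And>m. m \<in> S \<Longrightarrow> is_par2 m" using f unfolding par2_space_def S_def by auto
  have "(\<Sum>m\<in>S. (\<lambda>x. f m * basis_vec m x)) \<in> L"
    using fin by (rule L_sum) (intro L_smult bv_par2 p)
  moreover have "(\<Sum>m\<in>S. (\<lambda>x. f m * basis_vec m x)) = f"
  proof
    fix x
    have "(\<Sum>m\<in>S. (\<lambda>x. f m * basis_vec m x)) x = (\<Sum>m\<in>S. f m * basis_vec m x)" by (rule sum_fun_apply)
    also have "\<dots> = (\<Sum>m\<in>S. if m = x then f x else 0)"
      by (rule sum.cong) (auto simp: basis_vec_def)
    also have "\<dots> = f x" using fin by (simp add: S_def)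
    finally show "(\<Sum>m\<in>S. (\<lambda>x. f m * basis_vec m x)) x = f x" .
  qed
  ultimately show ?thesis by simp
qed

lemma bb_supp:
  assumes "bracket_basis c d m \<noteq> 0"
  shows "m \<in> {(fst d - 1 + arity c, snd d), (fst d, snd d - 1 + arity c),
              (fst c - 1 + arity d, snd c), (fst c, snd c - 1 + arity d)}" (is "m \<in> ?T")
proof (rule ccontr)
  assume m: "m \<notin> ?T"
  have "\<And>t. basis_vec (parcomp d t c) m = 0" using m by (auto simp: basis_vec_def parcomp_def)
  moreover have "\<And>s. basis_vec (parcomp c s d) m = 0" using m by (auto simp: basis_vec_def parcomp_def)
  ultimately have "bracket_basis c d m = 0" unfolding bracket_basis_def by (simp add: sum_fun_apply)
  with assms show False by simp
qed

lemma par2_add: "x \<in> par2_space \<Longrightarrow> y \<in> par2_space \<Longrightarrow> x + y \<in> par2_space"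
proof -
  assume x: "x \<in> par2_space" and y: "y \<in> par2_space"
  have "{m. (x + y) m \<noteq> 0} \<subseteq> {m. x m \<noteq> 0} \<union> {m. y m \<noteq> 0}" by auto
  then show ?thesis using x y unfolding par2_space_def by (auto intro: finite_subset)
qed

lemma par2_smult: "x \<in> par2_space \<Longrightarrow> (\<lambda>m. r * x m) \<in> par2_space"
proof -
  assume x: "x \<in> par2_space"
  have "{m. r * x m \<noteq> 0} \<subseteq> {m. x m \<noteq> 0}" by auto
  then show ?thesis using x unfolding par2_space_def by (auto intro: finite_subset)
qed

lemma par2_basis: "is_par2 c \<Longrightarrow> basis_vec c \<in> par2_space"
proof -
  assume "is_par2 c"
  moreover have "{m. basis_vec c m \<noteq> 0} = {c}" by (auto simp: basis_vec_def)
  ultimately show ?thesis unfolding par2_space_def by (auto simp: basis_vec_def)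
qed

lemma par2_bracket: "x \<in> par2_space \<Longrightarrow> y \<in> par2_space \<Longrightarrow> lie_bracket x y \<in> par2_space"
proof -
  assume x: "x \<in> par2_space" and y: "y \<in> par2_space"
  define Sx where "Sx = {m. x m \<noteq> 0}"
  define Sy where "Sy = {m. y m \<noteq> 0}"
  have fx: "finite Sx" and px: "\<And>c. c \<in> Sx \<Longrightarrow> is_par2 c" using x unfolding par2_space_def Sx_def by auto
  have fy: "finite Sy" and py: "\<And>c. c \<in> Sy \<Longrightarrow> is_par2 c" using y unfolding par2_space_def Sy_def by auto
  define T where "T = (\<lambda>c d. {(fst d - 1 + arity c, snd d), (fst d, snd d - 1 + arity c),
              (fst c - 1 + arity d, snd c), (fst c, snd c - 1 + arity d)})"
  have sub: "{m. lie_bracket x y m \<noteq> 0} \<subseteq> (\<Union>c\<in>Sx. \<Union>d\<in>Sy. T c d)"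
  proof
    fix m assume "m \<in> {m. lie_bracket x y m \<noteq> 0}"
    then have "(\<Sum>c\<in>Sx. \<Sum>d\<in>Sy. x c * y d * bracket_basis c d m) \<noteq> 0"
      unfolding lie_bracket_def Sx_def Sy_def by (simp add: sum_fun_apply)
    then obtain c d where "c \<in> Sx" "d \<in> Sy" "bracket_basis c d m \<noteq> 0"
      by (metis (no_types, lifting) mult_zero_right sum.neutral)
    then show "m \<in> (\<Union>c\<in>Sx. \<Union>d\<in>Sy. T c d)" using bb_supp unfolding T_def by blast
  qed
  have fin: "finite (\<Union>c\<in>Sx. \<Union>d\<in>Sy. T c d)" using fx fy unfolding T_def by auto
  have par: "\<And>m. m \<in> (\<Union>c\<in>Sx. \<Union>d\<in>Sy. T c d) \<Longrightarrow> is_par2 m"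
  proof -
    fix m assume "m \<in> (\<Union>c\<in>Sx. \<Union>d\<in>Sy. T c d)"
    then obtain c d where c: "c \<in> Sx" and d: "d \<in> Sy" and m: "m \<in> T c d" by blast
    obtain p q where pq: "c = (p,q)" by (cases c)
    obtain a b where ab: "d = (a,b)" by (cases d)
    have "p \<ge> 1" "q \<ge> 1" using px[OF c] pq by (auto simp: is_par2_def)
    moreover have "a \<ge> 1" "b \<ge> 1" using py[OF d] ab by (auto simp: is_par2_def)
    ultimately show "is_par2 m" using m pq ab unfolding T_def is_par2_def arity_def by auto
  qed
  have "finite {m. lie_bracket x y m \<noteq> 0}" using sub fin by (rule finite_subset)
  moreover have "\<forall>m. lie_bracket x y m \<noteq> 0 \<longrightarrow> is_par2 m" using sub par by blast
  ultimately show ?thesis unfolding par2_space_def by blast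
qed

lemma gen_sub: "x \<in> lie_generated {basis_vec (1,1), basis_vec (2,1), basis_vec (1,2),
            basis_vec (3,1) + basis_vec (1,3)} \<Longrightarrow> x \<in> par2_space"
proof (induction rule: lie_generated.induct)
  case (gen_base x)
  then show ?case by (auto intro!: par2_basis par2_add simp: is_par2_def)
next
  case gen_zero
  then show ?case unfolding par2_space_def by simp
next
  case (gen_add x y) then show ?case using par2_add by blast
next
  case (gen_smult x r) then show ?case using par2_smult by blast
next
  case (gen_bracket x y) then show ?case using par2_bracket by blast
qed

theorem theorem6p1:
  shows "lie_generated {basis_vec (1,1), basis_vec (2,1), basis_vec (1,2),
            basis_vec (3,1) + basis_vec (1,3)} = par2_space"
  using gen_sub par2_sub_L unfolding L_def by blast

end
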